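(* Let $\mathbb B=\mathbb{F}_2^4$ and let $\circ$ be an alternative operation on $\mathbb B$. Let $g_1,g_2\in\mathrm{GL}(\mathbb B,+)$ and $f\in\mathrm{Sym}(\mathbb B)$. Then for any $g_1'\in g_1H_\circ$ and any $g_2'\in H_\circ g_2$ one has $\delta^\circ_{g_2fg_1}=\delta^\circ_{g_2'fg_1'}$.
   Context: Maps are written in postfix notation: $xf$ is the image of $x$, and $fg$ means first $f$, then $g$. An alternative operation on $\mathbb B$ is defined from an elementary abelian $2$-subgroup $T<\mathrm{AGL}(\mathbb B,+)$ acting regularly: with $\tau_a$ the unique element of $T$ with $0\tau_a=a$, $a\circ b:=a\tau_b$; $\mathrm{AGL}(\mathbb B,\circ)$ is the normaliser of $T$ in $\mathrm{Sym}(\mathbb B)$ and $\mathrm{GL}(\mathbb B,\circ)$ its stabiliser of $0$; $H_\circ:=\mathrm{GL}(\mathbb B,+)\cap\mathrm{GL}(\mathbb B,\circ)$. For $f\in\mathrm{Sym}(\mathbb B)$, $\delta^\circ_f(a,b)=\#\{x\in\mathbb B: xf\circ(x\circ a)f=b\}$ and the $\circ$-differential uniformity is $\delta^\circ_f=\max_{a\neq0,\,b}\delta^\circ_f(a,b)$. *)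

theory Defs
  imports "HOL-Analysis.Analysis" "HOL-Library.Z2"
begin

text \<open>Maps are HOL functions; the paper's postfix x f is written f x, and the
  paper's postfix product f g (first f, then g) is written g \<circ> f.\<close>

type_synonym B = "bit ^ 4"

text \<open>GL(B,+): bijective additive (= F_2-linear) maps.\<close>
definition GL_plus :: "(B \<Rightarrow> B) set" where
  "GL_plus = {g. bij g \<and> (\<forall>x y. g (x + y) = g x + g y)}"

definition AGL_plus :: "(B \<Rightarrow> B) set" where
  "AGL_plus = {t. \<exists>A\<in>GL_plus. \<exists>b. \<forall>x. t x = A x + b}"

text \<open>T is an elementary abelian 2-subgroup of AGL(B,+) acting regularly on B.\<close>
definition alt_translation_group :: "(B \<Rightarrow> B) set \<Rightarrow> bool" where
  "alt_translation_group T \<longleftrightarrow>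
     T \<subseteq> AGL_plus \<and> id \<in> T \<and>
     (\<forall>s\<in>T. \<forall>t\<in>T. s \<circ> t \<in> T) \<and>
     (\<forall>t\<in>T. inv t \<in> T) \<and>
     (\<forall>s\<in>T. \<forall>t\<in>T. s \<circ> t = t \<circ> s) \<and>
     (\<forall>t\<in>T. t \<circ> t = id) \<and>
     (\<forall>a. \<exists>!t. t \<in> T \<and> t 0 = a)"

definition tau :: "(B \<Rightarrow> B) set \<Rightarrow> B \<Rightarrow> (B \<Rightarrow> B)" where
  "tau T a = (THE t. t \<in> T \<and> t 0 = a)"

definition circ_op :: "(B \<Rightarrow> B) set \<Rightarrow> B \<Rightarrow> B \<Rightarrow> B" where
  "circ_op T a b = tau T b a"

text \<open>AGL(B,\<circ>): normaliser of T in Sym(B).\<close>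
definition AGL_circ :: "(B \<Rightarrow> B) set \<Rightarrow> (B \<Rightarrow> B) set" where
  "AGL_circ T = {g. bij g \<and> (\<lambda>t. inv g \<circ> t \<circ> g) ` T = T}"

definition GL_circ :: "(B \<Rightarrow> B) set \<Rightarrow> (B \<Rightarrow> B) set" where
  "GL_circ T = {g \<in> AGL_circ T. g 0 = 0}"

definition H_circ :: "(B \<Rightarrow> B) set \<Rightarrow> (B \<Rightarrow> B) set" where
  "H_circ T = GL_plus \<inter> GL_circ T"

definition delta_circ :: "(B \<Rightarrow> B) set \<Rightarrow> (B \<Rightarrow> B) \<Rightarrow> B \<Rightarrow> B \<Rightarrow> nat" where
  "delta_circ T f a b = card {x. circ_op T (f x) (f (circ_op T x a)) = b}"

definition diff_unif_circ :: "(B \<Rightarrow> B) set \<Rightarrow> (B \<Rightarrow> B) \<Rightarrow> nat" where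
  "diff_unif_circ T f = Max {delta_circ T f a b | a b. a \<noteq> 0}"

end

theory Submission
  imports Defs
begin

lemma tau_props:
  assumes "alt_translation_group T"
  shows "tau T a \<in> T \<and> tau T a 0 = a"
proof -
  from assms have "\<exists>!t. t \<in> T \<and> t 0 = a" unfolding alt_translation_group_def by (elim conjE) (rule spec)
  then show ?thesis unfolding tau_def by (rule theI')
qed

lemma tau_unique:
  assumes "alt_translation_group T" "t \<in> T" "t 0 = a"
  shows "tau T a = t"
proof -
  from assms(1) have "\<exists>!t. t \<in> T \<and> t 0 = a" unfolding alt_translation_group_def by (elim conjE) (rule spec)
  then show ?thesis unfolding tau_def using assms(2,3) by (simp add: the1_equality)
qed

lemma GL_circ_D:
  assumes "h \<in> GL_circ T"
  shows "bij h" "(\<lambda>t. inv h \<circ> t \<circ> h) ` T = T" "h 0 = 0"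
  using assms unfolding GL_circ_def AGL_circ_def mem_Collect_eq by simp_all

lemma circ_hom:
  assumes T: "alt_translation_group T" and h: "h \<in> GL_circ T"
  shows "h (circ_op T a b) = circ_op T (h a) (h b)"
proof -
  note bh = GL_circ_D(1)[OF h] and img = GL_circ_D(2)[OF h] and h0 = GL_circ_D(3)[OF h]
  have tT: "tau T b \<in> T" using tau_props[OF T] by (rule conjunct1)
  have "tau T b \<in> (\<lambda>t. inv h \<circ> t \<circ> h) ` T" unfolding img by (rule tT)
  then obtain t where t: "t \<in> T" and tb: "tau T b = inv h \<circ> t \<circ> h"
    by (rule imageE)
  have hinv: "\<And>x. h (inv h x) = x" using bh by (simp add: bij_is_surj surj_f_inv_f)
  have ih: "\<And>x. inv h (h x) = x" using bh by (simp add: bij_is_inj)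
  have "b = tau T b 0" using tau_props[OF T] by simp
  also have "\<dots> = inv h (t (h 0))" using tb by simp
  finally have "h b = t 0" using h0 hinv by simp
  then have "tau T (h b) = t" using tau_unique[OF T t] by simp
  moreover have "h (tau T b a) = t (h a)" using tb hinv by simp
  ultimately show ?thesis unfolding circ_op_def by simp
qed

lemma delta_conj:
  assumes T: "alt_translation_group T" and h1: "h1 \<in> GL_circ T" and h2: "h2 \<in> GL_circ T"
  shows "delta_circ T (h1 \<circ> F \<circ> h2) a b = delta_circ T F (h2 a) (inv h1 b)"
proof -
  note b1 = GL_circ_D(1)[OF h1] and b2 = GL_circ_D(1)[OF h2]
  define Q where "Q y = (circ_op T (F y) (F (circ_op T y (h2 a))) = inv h1 b)" for y
  have "{x. circ_op T ((h1 \<circ> F \<circ> h2) x) ((h1 \<circ> F \<circ> h2) (circ_op T x a)) = b} = {x. Q (h2 x)}"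
  proof -
    have "\<And>x. (circ_op T ((h1 \<circ> F \<circ> h2) x) ((h1 \<circ> F \<circ> h2) (circ_op T x a)) = b) = Q (h2 x)"
    proof -
      fix x
      have "circ_op T ((h1 \<circ> F \<circ> h2) x) ((h1 \<circ> F \<circ> h2) (circ_op T x a))
          = h1 (circ_op T (F (h2 x)) (F (circ_op T (h2 x) (h2 a))))"
        using circ_hom[OF T h1] circ_hom[OF T h2] by simp
      then show "?thesis x" unfolding Q_def using b1
        by (metis bij_inv_eq_iff)
    qed
    then show ?thesis by simp
  qed
  moreover have "h2 ` {x. Q (h2 x)} = {y. Q y}"
  proof (intro equalityI subsetI)
    fix y assume "y \<in> {y. Q y}"
    moreover have "y = h2 (inv h2 y)" using b2 by (simp add: bij_is_surj surj_f_inv_f)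
    ultimately show "y \<in> h2 ` {x. Q (h2 x)}" by (metis (mono_tags) image_eqI mem_Collect_eq)
  qed auto
  moreover have "inj h2" using b2 bij_def by blast
  ultimately have "card {x. circ_op T ((h1 \<circ> F \<circ> h2) x) ((h1 \<circ> F \<circ> h2) (circ_op T x a)) = b}
     = card {y. Q y}"
    by (metis card_image inj_on_subset subset_UNIV)
  then show ?thesis unfolding delta_circ_def Q_def by simp
qed

lemma unif_conj:
  assumes T: "alt_translation_group T" and h1: "h1 \<in> GL_circ T" and h2: "h2 \<in> GL_circ T"
  shows "diff_unif_circ T (h1 \<circ> F \<circ> h2) = diff_unif_circ T F"
proof -
  note b1 = GL_circ_D(1)[OF h1] and b2 = GL_circ_D(1)[OF h2] and z2 = GL_circ_D(3)[OF h2]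
  have "{delta_circ T (h1 \<circ> F \<circ> h2) a b | a b. a \<noteq> 0} = {delta_circ T F a b | a b. a \<noteq> 0}"
  proof (intro equalityI subsetI)
    fix v assume "v \<in> {delta_circ T (h1 \<circ> F \<circ> h2) a b | a b. a \<noteq> 0}"
    then obtain a b where v: "v = delta_circ T (h1 \<circ> F \<circ> h2) a b" and a: "a \<noteq> 0" by blast
    have "h2 a \<noteq> 0" using a z2 b2 by (metis bij_def injD)
    then show "v \<in> {delta_circ T F a b | a b. a \<noteq> 0}"
      using v delta_conj[OF T h1 h2] by blast
  next
    fix v assume "v \<in> {delta_circ T F a b | a b. a \<noteq> 0}"
    then obtain a b where v: "v = delta_circ T F a b" and a: "a \<noteq> 0" by blast
    have e1: "h2 (inv h2 a) = a" using b2 by (simp add: bij_is_surj surj_f_inv_f)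
    have e2: "inv h1 (h1 b) = b" using b1 by (simp add: bij_is_inj inv_f_f)
    have "inv h2 a \<noteq> 0" using a z2 e1 by metis
    moreover have "v = delta_circ T (h1 \<circ> F \<circ> h2) (inv h2 a) (h1 b)"
      using v delta_conj[OF T h1 h2] e1 e2 by simp
    ultimately show "v \<in> {delta_circ T (h1 \<circ> F \<circ> h2) a b | a b. a \<noteq> 0}" by blast
  qed
  then show ?thesis unfolding diff_unif_circ_def by simp
qed

theorem proposition4:
  fixes T :: "(B \<Rightarrow> B) set" and g1 g2 g1' g2' f :: "B \<Rightarrow> B"
  assumes "alt_translation_group T"
    and "g1 \<in> GL_plus" and "g2 \<in> GL_plus"
    and "bij f"
    and "\<exists>h\<in>H_circ T. g1' = h \<circ> g1"
    and "\<exists>h\<in>H_circ T. g2' = g2 \<circ> h"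
  shows "diff_unif_circ T (g1 \<circ> f \<circ> g2) = diff_unif_circ T (g1' \<circ> f \<circ> g2')"
proof -
  obtain h1 where h1: "h1 \<in> GL_circ T" "g1' = h1 \<circ> g1"
    using assms(5) unfolding H_circ_def by blast
  obtain h2 where h2: "h2 \<in> GL_circ T" "g2' = g2 \<circ> h2"
    using assms(6) unfolding H_circ_def by blast
  have e: "g1' \<circ> f \<circ> g2' = h1 \<circ> (g1 \<circ> f \<circ> g2) \<circ> h2"
    unfolding h1(2) h2(2) by (simp only: comp_assoc)
  show ?thesis unfolding e by (rule unif_conj[OF assms(1) h1(1) h2(1), symmetric])
qed

end
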